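(* Let $\sigma_0,\sigma_\epsilon>0$, $\theta_0\in\mathbb{R}$, prior $\Theta\sim N(\theta_0,\sigma_0^2)$, signal $X=\Theta+\epsilon$ with $\epsilon\sim\mathrm{Laplace}(0,\sigma_\epsilon)$ independent of $\Theta$, and let $\theta_1(x)=\mathbb{E}[\Theta\mid X=x]$. With $a=\sqrt2\sigma_0/\sigma_\epsilon$, the DeGroot coefficient $\omega=\frac{d\theta_1}{dx}\big|_{x=\theta_0}$ is $$\omega=\frac a2\Bigl(\frac{2}{\sqrt\pi\,\operatorname{erfcx}(a/2)}-a\Bigr),$$ where $\operatorname{erfcx}(y)=e^{y^2}\bigl(1-\frac{2}{\sqrt\pi}\int_0^y e^{-t^2}dt\bigr)$.
   Context: $\mathrm{Laplace}(\mu,s)$ has density $t\mapsto\frac{1}{2s}e^{-|t-\mu|/s}$. The posterior mean is $\theta_1(x)=\frac{\int\theta f_\Theta(\theta)l_\epsilon(x-\theta)d\theta}{\int f_\Theta(\theta)l_\epsilon(x-\theta)d\theta}$. *)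

theory Defs
  imports "HOL-Analysis.Analysis"
begin

definition normal_dens :: "real \<Rightarrow> real \<Rightarrow> real \<Rightarrow> real" where
  "normal_dens mu s t = exp (- ((t - mu)^2) / (2 * s^2)) / (s * sqrt (2 * pi))"

definition laplace_dens :: "real \<Rightarrow> real \<Rightarrow> real \<Rightarrow> real" where
  "laplace_dens mu s t = exp (- \<bar>t - mu\<bar> / s) / (2 * s)"

definition post_mean :: "real \<Rightarrow> real \<Rightarrow> real \<Rightarrow> real \<Rightarrow> real" where
  "post_mean theta0 sigma0 sigmaeps x =
     (LINT theta|lborel. theta * normal_dens theta0 sigma0 theta * laplace_dens 0 sigmaeps (x - theta))
   / (LINT theta|lborel. normal_dens theta0 sigma0 theta * laplace_dens 0 sigmaeps (x - theta))"

definition erfcx :: "real \<Rightarrow> real" where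
  "erfcx y = exp (y^2) * (1 - 2 / sqrt pi * (LBINT t=0..y. exp (- (t^2))))"

end

theory Submission
  imports Defs "HOL-Probability.Probability"
begin

lemma lint_split:
  fixes f :: "real \<Rightarrow> real"
  assumes "integrable lborel f"
  shows "(LINT t|lborel. f t) = (LBINT t=-\<infinity>..ereal x. f t) + (LBINT t=ereal x..\<infinity>. f t)"
proof -
  have i: "interval_lebesgue_integrable lborel (-\<infinity>) \<infinity> f"
    using assms by (simp add: interval_lebesgue_integrable_def set_integrable_def)
  have "(LBINT t=-\<infinity>..ereal x. f t) + (LBINT t=ereal x..\<infinity>. f t) = (LBINT t=-\<infinity>..\<infinity>. f t)"
    by (rule interval_integral_sum) (use i in simp)
  also have "\<dots> = (LINT t|lborel. f t)"
    by (simp add: interval_lebesgue_integral_def set_lebesgue_integral_def)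
  finally show ?thesis by simp
qed

lemma deriv_Lint:
  fixes p :: "real \<Rightarrow> real"
  assumes "continuous_on UNIV p"
  shows "((\<lambda>x. LBINT t=ereal x0..ereal x. p t) has_real_derivative p x0) (at x0)"
proof -
  have "((\<lambda>u. LBINT y=x0..u. p y) has_vector_derivative (p x0)) (at x0 within {x0-1..x0+1})"
    by (rule interval_integral_FTC2) (auto intro: continuous_on_subset[OF assms])
  then show ?thesis
    by (simp add: at_within_Icc_at has_real_derivative_iff_has_vector_derivative)
qed

lemma lapA:
  fixes h :: "real \<Rightarrow> real" and a x0 :: real
  assumes a: "a > 0" and hc: "continuous_on UNIV h" and hi: "integrable lborel h"
  shows "((\<lambda>x. LINT t|lborel. h t * exp (- a * \<bar>x - t\<bar>)) has_real_derivative
          a * (LINT t|lborel. sgn (t - x0) * h t * exp (- a * \<bar>x0 - t\<bar>))) (at x0)"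
proof -
  have hm[measurable]: "h \<in> borel_measurable borel"
    by (rule borel_measurable_continuous_onI[OF hc])
  define p where "p t = h t * exp (a * t)" for t
  define q where "q t = h t * exp (- a * t)" for t
  define P where "P x = (LBINT t=-\<infinity>..ereal x. p t)" for x
  define Q where "Q x = (LBINT t=ereal x..\<infinity>. q t)" for x
  have pm[measurable]: "p \<in> borel_measurable borel" unfolding p_def by measurable
  have qm[measurable]: "q \<in> borel_measurable borel" unfolding q_def by measurable
  have pc: "continuous_on UNIV p" unfolding p_def by (intro continuous_intros hc)
  have qc: "continuous_on UNIV q" unfolding q_def by (intro continuous_intros hc)
  have intP: "interval_lebesgue_integrable lborel (-\<infinity>) (ereal m) p" for m
  proof -
    have "integrable lborel (\<lambda>t. indicator {..<m} t *\<^sub>R p t)"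
    proof (rule Bochner_Integration.integrable_bound)
      show "integrable lborel (\<lambda>t. exp (a * m) * h t)" using hi by simp
      show "(\<lambda>t. indicator {..<m} t *\<^sub>R p t) \<in> borel_measurable lborel" by measurable
      show "AE t in lborel. norm (indicator {..<m} t *\<^sub>R p t) \<le> norm (exp (a * m) * h t)"
      proof (intro AE_I2)
        fix t
        have "t < m \<Longrightarrow> \<bar>h t\<bar> * exp (a * t) \<le> \<bar>h t\<bar> * exp (a * m)"
          using a by (intro mult_left_mono) auto
        then show "norm (indicator {..<m} t *\<^sub>R p t) \<le> norm (exp (a * m) * h t)"
          by (auto simp: p_def abs_mult indicator_def mult.commute)
      qed
    qed
    then show ?thesis by (simp add: interval_lebesgue_integrable_def set_integrable_def)
  qed
  have intQ: "interval_lebesgue_integrable lborel (ereal m) \<infinity> q" for m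
  proof -
    have "integrable lborel (\<lambda>t. indicator {m<..} t *\<^sub>R q t)"
    proof (rule Bochner_Integration.integrable_bound)
      show "integrable lborel (\<lambda>t. exp (- a * m) * h t)" using hi by simp
      show "(\<lambda>t. indicator {m<..} t *\<^sub>R q t) \<in> borel_measurable lborel" by measurable
      show "AE t in lborel. norm (indicator {m<..} t *\<^sub>R q t) \<le> norm (exp (- a * m) * h t)"
      proof (intro AE_I2)
        fix t
        have "m < t \<Longrightarrow> \<bar>h t\<bar> * exp (- a * t) \<le> \<bar>h t\<bar> * exp (- a * m)"
          using a by (intro mult_left_mono) auto
        then show "norm (indicator {m<..} t *\<^sub>R q t) \<le> norm (exp (- a * m) * h t)"
          by (auto simp: q_def abs_mult indicator_def mult.commute)
      qed
    qed
    then show ?thesis by (simp add: interval_lebesgue_integrable_def set_integrable_def)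
  qed
  have intK: "integrable lborel (\<lambda>t. g t * h t * exp (- a * \<bar>x - t\<bar>))"
    if gm: "g \<in> borel_measurable borel" and gb: "\<And>t. \<bar>g t\<bar> \<le> 1" for x g
  proof (rule Bochner_Integration.integrable_bound[OF hi])
    show "(\<lambda>t. g t * h t * exp (- a * \<bar>x - t\<bar>)) \<in> borel_measurable lborel" using gm by measurable
    show "AE t in lborel. norm (g t * h t * exp (- a * \<bar>x - t\<bar>)) \<le> norm (h t)"
    proof (intro AE_I2)
      fix t
      have "\<bar>g t\<bar> * exp (- a * \<bar>x - t\<bar>) \<le> 1 * 1"
        using gb[of t] a by (intro mult_mono) (auto simp: mult_nonneg_nonneg)
      then have "\<bar>h t\<bar> * (\<bar>g t\<bar> * exp (- a * \<bar>x - t\<bar>)) \<le> \<bar>h t\<bar> * 1"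
        by (intro mult_left_mono) auto
      then show "norm (g t * h t * exp (- a * \<bar>x - t\<bar>)) \<le> norm (h t)"
        by (simp add: abs_mult mult_ac)
    qed
  qed
  have split: "(LINT t|lborel. h t * exp (- a * \<bar>x - t\<bar>)) = exp (- a * x) * P x + exp (a * x) * Q x" for x
  proof -
    have "integrable lborel (\<lambda>t. 1 * h t * exp (- a * \<bar>x - t\<bar>))" by (rule intK) auto
    then have "(LINT t|lborel. h t * exp (- a * \<bar>x - t\<bar>)) =
      (LBINT t=-\<infinity>..ereal x. h t * exp (- a * \<bar>x - t\<bar>)) + (LBINT t=ereal x..\<infinity>. h t * exp (- a * \<bar>x - t\<bar>))"
      by (intro lint_split) simp
    also have "(LBINT t=-\<infinity>..ereal x. h t * exp (- a * \<bar>x - t\<bar>)) = (LBINT t=-\<infinity>..ereal x. exp (- a * x) * p t)"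
      by (intro interval_integral_cong) (auto simp: p_def einterval_iff mult_exp_exp algebra_simps)
    also have "(LBINT t=ereal x..\<infinity>. h t * exp (- a * \<bar>x - t\<bar>)) = (LBINT t=ereal x..\<infinity>. exp (a * x) * q t)"
      by (intro interval_integral_cong) (auto simp: q_def einterval_iff mult_exp_exp algebra_simps)
    finally show ?thesis by (simp add: P_def Q_def)
  qed
  have ssplit: "(LINT t|lborel. sgn (t - x0) * h t * exp (- a * \<bar>x0 - t\<bar>)) = exp (a * x0) * Q x0 - exp (- a * x0) * P x0"
  proof -
    have "integrable lborel (\<lambda>t. sgn (t - x0) * h t * exp (- a * \<bar>x0 - t\<bar>))" by (rule intK) (auto simp: abs_sgn_eq)
    then have "(LINT t|lborel. sgn (t - x0) * h t * exp (- a * \<bar>x0 - t\<bar>)) =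
      (LBINT t=-\<infinity>..ereal x0. sgn (t - x0) * h t * exp (- a * \<bar>x0 - t\<bar>)) + (LBINT t=ereal x0..\<infinity>. sgn (t - x0) * h t * exp (- a * \<bar>x0 - t\<bar>))"
      by (intro lint_split) simp
    also have "(LBINT t=-\<infinity>..ereal x0. sgn (t - x0) * h t * exp (- a * \<bar>x0 - t\<bar>)) = (LBINT t=-\<infinity>..ereal x0. - (exp (- a * x0) * p t))"
      by (intro interval_integral_cong) (auto simp: p_def einterval_iff mult_exp_exp algebra_simps)
    also have "(LBINT t=ereal x0..\<infinity>. sgn (t - x0) * h t * exp (- a * \<bar>x0 - t\<bar>)) = (LBINT t=ereal x0..\<infinity>. exp (a * x0) * q t)"
      by (intro interval_integral_cong) (auto simp: q_def einterval_iff mult_exp_exp algebra_simps)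
    finally show ?thesis by (simp add: P_def Q_def interval_lebesgue_integral_uminus)
  qed
  have Pe: "P x = P x0 + (LBINT t=ereal x0..ereal x. p t)" for x
    unfolding P_def
    by (rule interval_integral_sum[symmetric]) (cases "x0 \<le> x"; simp add: max_def intP)
  have Qe: "Q x = Q x0 - (LBINT t=ereal x0..ereal x. q t)" for x
  proof -
    have "(LBINT t=ereal x0..ereal x. q t) + Q x = Q x0"
      unfolding Q_def
      by (rule interval_integral_sum) (cases "x0 \<le> x"; simp add: min_def intQ)
    then show ?thesis by simp
  qed
  have H: "(\<lambda>x. LINT t|lborel. h t * exp (- a * \<bar>x - t\<bar>)) =
     (\<lambda>x. exp (- a * x) * (P x0 + (LBINT t=ereal x0..ereal x. p t)) + exp (a * x) * (Q x0 - (LBINT t=ereal x0..ereal x. q t)))"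
  proof (rule ext)
    fix x
    show "(LINT t|lborel. h t * exp (- a * \<bar>x - t\<bar>)) = exp (- a * x) * (P x0 + (LBINT t=ereal x0..ereal x. p t)) + exp (a * x) * (Q x0 - (LBINT t=ereal x0..ereal x. q t))"
      unfolding split[of x] by (simp only: Pe[of x] Qe[of x])
  qed
  have "((\<lambda>x. exp (- a * x) * (P x0 + (LBINT t=ereal x0..ereal x. p t)) + exp (a * x) * (Q x0 - (LBINT t=ereal x0..ereal x. q t)))
     has_real_derivative
     (exp (- a * x0) * (- a) * (P x0 + 0) + exp (- a * x0) * p x0 + (exp (a * x0) * a * (Q x0 - 0) - exp (a * x0) * q x0))) (at x0)"
    by (intro derivative_eq_intros refl) (auto intro: deriv_Lint[OF pc] deriv_Lint[OF qc])
  moreover have "exp (- a * x0) * (- a) * (P x0 + 0) + exp (- a * x0) * p x0 + (exp (a * x0) * a * (Q x0 - 0) - exp (a * x0) * q x0)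
     = a * (exp (a * x0) * Q x0 - exp (- a * x0) * P x0)"
    by (simp add: p_def q_def algebra_simps mult_exp_exp)
  ultimately show ?thesis unfolding H ssplit by simp
qed

definition D0 :: "real \<Rightarrow> real \<Rightarrow> real" where
  "D0 a y = (LINT t|lborel. exp (- t\<^sup>2) * exp (- a * \<bar>y - t\<bar>))"
definition N0 :: "real \<Rightarrow> real \<Rightarrow> real" where
  "N0 a y = (LINT t|lborel. t * exp (- t\<^sup>2) * exp (- a * \<bar>y - t\<bar>))"

lemma gauss_hb0: "has_bochner_integral lborel (\<lambda>t::real. exp (- t\<^sup>2)) (sqrt pi)"
  using has_bochner_integral_even_function[OF gaussian_moment_0] by simp

lemma gi0: "integrable lborel (\<lambda>t::real. exp (- t\<^sup>2))"
  using gauss_hb0 by (rule integrable.intros)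

lemma gi1: "integrable lborel (\<lambda>t::real. t * exp (- t\<^sup>2))"
proof -
  have "has_bochner_integral lborel (\<lambda>t::real. exp (- t\<^sup>2) * t) 0"
    by (rule has_bochner_integral_odd_function[OF gaussian_moment_1]) simp
  then have "integrable lborel (\<lambda>t::real. exp (- t\<^sup>2) * t)" by (rule integrable.intros)
  moreover have "(\<lambda>t::real. exp (- t\<^sup>2) * t) = (\<lambda>t. t * exp (- t\<^sup>2))" by (rule ext) (rule mult.commute)
  ultimately show ?thesis by metis
qed

lemma int_kernel:
  fixes h :: "real \<Rightarrow> real"
  assumes hi: "integrable lborel h" and hm: "h \<in> borel_measurable borel" and a: "a \<ge> 0"
  shows "integrable lborel (\<lambda>t. h t * exp (- a * \<bar>y - t\<bar>))"
proof (rule Bochner_Integration.integrable_bound[OF hi])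
  show "(\<lambda>t. h t * exp (- a * \<bar>y - t\<bar>)) \<in> borel_measurable lborel" using hm by measurable
  show "AE t in lborel. norm (h t * exp (- a * \<bar>y - t\<bar>)) \<le> norm (h t)"
  proof (intro AE_I2)
    fix t
    have "\<bar>h t\<bar> * exp (- a * \<bar>y - t\<bar>) \<le> \<bar>h t\<bar> * 1"
      using a by (intro mult_left_mono) (auto simp: mult_nonneg_nonneg)
    then show "norm (h t * exp (- a * \<bar>y - t\<bar>)) \<le> norm (h t)" by (simp add: abs_mult)
  qed
qed

lemma reduce:
  fixes sigma0 s c x b a :: real
  assumes sp: "sigma0 > 0" and s: "s > 0" and bdef: "b = sqrt 2 * sigma0" and adef: "a = b / s"
  shows "post_mean c sigma0 s x = (c * D0 a ((x - c) / b) + b * N0 a ((x - c) / b)) / D0 a ((x - c) / b)"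
proof -
  define y where "y = (x - c) / b"
  define K where "K = 1 / (sigma0 * sqrt (2 * pi)) / (2 * s)"
  have bp: "b > 0" using sp bdef by simp
  have ap: "a > 0" using bp s adef by simp
  have Kp: "K > 0" using sp s by (simp add: K_def)
  have b2: "b\<^sup>2 = 2 * sigma0\<^sup>2" using bdef by (simp add: power_mult_distrib)
  have aff: "(LINT t|lborel. f t) = b * (LINT v|lborel. f (c + b * v))" for f :: "real \<Rightarrow> real"
    using lborel_integral_real_affine[of b f c] bp by simp
  have g: "normal_dens c sigma0 (c + b * v) = exp (- v\<^sup>2) / (sigma0 * sqrt (2 * pi))" for v
  proof -
    have "(c + b * v - c)\<^sup>2 / (2 * sigma0\<^sup>2) = v\<^sup>2"
      using sp by (simp add: power_mult_distrib b2)
    then show ?thesis unfolding normal_dens_def by (simp add: minus_divide_left[symmetric])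
  qed
  have L: "laplace_dens 0 s (x - (c + b * v)) = exp (- a * \<bar>y - v\<bar>) / (2 * s)" for v
  proof -
    have "x - (c + b * v) = b * (y - v)" using bp by (simp add: y_def field_simps)
    then have "\<bar>x - (c + b * v) - 0\<bar> / s = a * \<bar>y - v\<bar>"
      using bp by (simp add: abs_mult adef)
    then show ?thesis unfolding laplace_dens_def by (simp add: minus_divide_left[symmetric])
  qed
  have iE: "integrable lborel (\<lambda>t. exp (- t\<^sup>2) * exp (- a * \<bar>y - t\<bar>))"
    by (rule int_kernel[OF gi0]) (use ap in auto)
  have iN: "integrable lborel (\<lambda>t. t * exp (- t\<^sup>2) * exp (- a * \<bar>y - t\<bar>))"
    by (rule int_kernel[OF gi1]) (use ap in auto)
  have num: "(LINT t|lborel. t * normal_dens c sigma0 t * laplace_dens 0 s (x - t)) = b * (K * (c * D0 a y + b * N0 a y))"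
  proof -
    have "(LINT t|lborel. t * normal_dens c sigma0 t * laplace_dens 0 s (x - t)) =
       b * (LINT v|lborel. K * (c * (exp (- v\<^sup>2) * exp (- a * \<bar>y - v\<bar>)) + b * (v * exp (- v\<^sup>2) * exp (- a * \<bar>y - v\<bar>))))"
      by (subst aff, rule arg_cong[where f="\<lambda>z. b * z"], rule Bochner_Integration.integral_cong[OF refl])
        (simp only: g L, simp add: K_def field_simps)
    also have "\<dots> = b * (K * (c * D0 a y + b * N0 a y))"
      using iE iN by (simp add: D0_def N0_def)
    finally show ?thesis .
  qed
  have den: "(LINT t|lborel. normal_dens c sigma0 t * laplace_dens 0 s (x - t)) = b * (K * D0 a y)"
  proof -
    have "(LINT t|lborel. normal_dens c sigma0 t * laplace_dens 0 s (x - t)) =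
       b * (LINT v|lborel. K * (exp (- v\<^sup>2) * exp (- a * \<bar>y - v\<bar>)))"
      by (subst aff, rule arg_cong[where f="\<lambda>z. b * z"], rule Bochner_Integration.integral_cong[OF refl])
        (simp only: g L, simp add: K_def field_simps)
    also have "\<dots> = b * (K * D0 a y)"
      by (simp add: D0_def)
    finally show ?thesis .
  qed
  show ?thesis
    unfolding post_mean_def num den y_def[symmetric]
    using bp Kp by (simp add: mult.assoc[symmetric])
qed

lemma T0:
  fixes y :: real assumes y: "y \<ge> 0"
  shows "has_bochner_integral lborel (\<lambda>u. indicator {0..} u *\<^sub>R exp (- (u + y)\<^sup>2))
           (sqrt pi / 2 - (LBINT t=0..y. exp (- (t^2))))"
proof -
  have si: "set_integrable lborel {0..<y} (\<lambda>t::real. exp (- (t^2)))"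
    by (rule set_integrable_subset[OF borel_integrable_atLeastAtMost'[of 0 y]])
       (auto intro!: continuous_intros)
  have A1: "has_bochner_integral lborel (\<lambda>t. indicator {0..<y} t *\<^sub>R exp (- (t^2))) (LBINT t=0..y. exp (- (t^2)))"
    using si y interval_integral_Ico[of 0 y "\<lambda>t. exp (- (t^2))"]
    by (simp add: has_bochner_integral_iff set_integrable_def set_lebesgue_integral_def zero_ereal_def)
  have "has_bochner_integral lborel (\<lambda>t. indicator {0..} t *\<^sub>R exp (- t\<^sup>2) - indicator {0..<y} t *\<^sub>R exp (- (t^2)))
     (sqrt pi / 2 - (LBINT t=0..y. exp (- (t^2))))"
    by (rule has_bochner_integral_diff[OF gaussian_moment_0 A1])
  then have "has_bochner_integral lborel (\<lambda>t. indicator {y..} t *\<^sub>R exp (- (t^2)))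
     (sqrt pi / 2 - (LBINT t=0..y. exp (- (t^2))))"
    by (rule has_bochner_integral_cong[THEN iffD1, rotated 3]) (use y in \<open>auto simp: indicator_def\<close>)
  then have "has_bochner_integral lborel (\<lambda>u. indicator {y..} (y + 1 * u) *\<^sub>R exp (- ((y + 1 * u)^2)))
     ((sqrt pi / 2 - (LBINT t=0..y. exp (- (t^2)))) /\<^sub>R \<bar>1\<bar>)"
    by (subst (asm) lborel_has_bochner_integral_real_affine_iff[where c=1 and t=y]) simp_all
  then show ?thesis
    by (rule has_bochner_integral_cong[THEN iffD1, rotated 3]) (auto simp: indicator_def add.commute)
qed

lemma T1:
  fixes y :: real assumes y: "y \<ge> 0"
  shows "has_bochner_integral lborel (\<lambda>u. indicator {0..} u *\<^sub>R ((u + y) * exp (- (u + y)\<^sup>2)))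
           (exp (- y\<^sup>2) / 2)"
proof -
  have si: "set_integrable lborel {0..<y} (\<lambda>t::real. t * exp (- (t^2)))"
    by (rule set_integrable_subset[OF borel_integrable_atLeastAtMost'[of 0 y]])
       (auto intro!: continuous_intros)
  have ftc: "(LBINT t=ereal 0..ereal y. t * exp (- (t^2))) = (- exp (- y\<^sup>2) / 2) - (- exp (- 0\<^sup>2) / 2)"
  proof (rule interval_integral_FTC_finite)
    show "continuous_on {min 0 y..max 0 y} (\<lambda>t::real. t * exp (- (t^2)))" by (intro continuous_intros)
    fix x :: real
    have "((\<lambda>t::real. - exp (- t\<^sup>2) / 2) has_real_derivative x * exp (- (x^2))) (at x within {min 0 y..max 0 y})"
      by (auto intro!: derivative_eq_intros simp: power2_eq_square)
    then show "((\<lambda>t::real. - exp (- t\<^sup>2) / 2) has_vector_derivative x * exp (- (x^2))) (at x within {min 0 y..max 0 y})"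
      by (simp add: has_real_derivative_iff_has_vector_derivative)
  qed
  have A1: "has_bochner_integral lborel (\<lambda>t. indicator {0..<y} t *\<^sub>R (t * exp (- (t^2)))) ((1 - exp (- y\<^sup>2)) / 2)"
    using si y ftc interval_integral_Ico[of 0 y "\<lambda>t. t * exp (- (t^2))"]
    by (simp add: has_bochner_integral_iff set_integrable_def set_lebesgue_integral_def diff_divide_distrib)
  have "has_bochner_integral lborel (\<lambda>t. indicator {0..} t *\<^sub>R (exp (- t\<^sup>2) * t) - indicator {0..<y} t *\<^sub>R (t * exp (- (t^2))))
     (1 / 2 - (1 - exp (- y\<^sup>2)) / 2)"
    by (rule has_bochner_integral_diff[OF gaussian_moment_1 A1])
  then have "has_bochner_integral lborel (\<lambda>t. indicator {y..} t *\<^sub>R (t * exp (- (t^2)))) (exp (- y\<^sup>2) / 2)"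
    by (rule has_bochner_integral_cong[THEN iffD1, rotated 3]) (use y in \<open>auto simp: indicator_def field_simps\<close>)
  then have "has_bochner_integral lborel (\<lambda>u. indicator {y..} (y + 1 * u) *\<^sub>R ((y + 1 * u) * exp (- ((y + 1 * u)^2))))
     ((exp (- y\<^sup>2) / 2) /\<^sub>R \<bar>1\<bar>)"
    by (subst (asm) lborel_has_bochner_integral_real_affine_iff[where c=1 and t=y]) simp_all
  then show ?thesis
    by (rule has_bochner_integral_cong[THEN iffD1, rotated 3]) (auto simp: indicator_def add.commute)
qed

lemma expid: "exp (a\<^sup>2 / 4) * exp (- (u + a / 2)\<^sup>2) = exp (- u\<^sup>2) * exp (- a * u)" for a u :: real
proof -
  have "a\<^sup>2 / 4 + - (u + a / 2)\<^sup>2 = - u\<^sup>2 + - a * u" by (simp add: power2_eq_square field_simps)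
  then show ?thesis by (simp add: exp_add[symmetric])
qed

lemma Hv0:
  fixes a :: real assumes a: "a > 0"
  shows "has_bochner_integral lborel (\<lambda>u. indicator {0..} u *\<^sub>R (exp (- u\<^sup>2) * exp (- a * \<bar>0 - u\<bar>)))
     (exp (a\<^sup>2 / 4) * (sqrt pi / 2 - (LBINT t=0..a/2. exp (- (t^2)))))"
proof -
  have "has_bochner_integral lborel (\<lambda>u. exp (a\<^sup>2 / 4) * (indicator {0..} u *\<^sub>R exp (- (u + a/2)\<^sup>2)))
     (exp (a\<^sup>2 / 4) * (sqrt pi / 2 - (LBINT t=0..a/2. exp (- (t^2)))))"
    by (rule has_bochner_integral_mult_right[OF T0]) (use a in simp)
  then show ?thesis
    by (rule has_bochner_integral_cong[THEN iffD1, rotated 3]) (auto simp: indicator_def expid)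
qed

lemma Hv1:
  fixes a :: real assumes a: "a > 0"
  shows "has_bochner_integral lborel (\<lambda>u. indicator {0..} u *\<^sub>R (sgn (u - 0) * (u * exp (- u\<^sup>2)) * exp (- a * \<bar>0 - u\<bar>)))
     (exp (a\<^sup>2 / 4) * (exp (- (a/2)\<^sup>2) / 2) - exp (a\<^sup>2 / 4) * (a / 2) * (sqrt pi / 2 - (LBINT t=0..a/2. exp (- (t^2)))))"
proof -
  have h1: "has_bochner_integral lborel (\<lambda>u. exp (a\<^sup>2 / 4) * (indicator {0..} u *\<^sub>R ((u + a/2) * exp (- (u + a/2)\<^sup>2))))
     (exp (a\<^sup>2 / 4) * (exp (- (a/2)\<^sup>2) / 2))"
    by (rule has_bochner_integral_mult_right[OF T1]) (use a in simp)
  have h0: "has_bochner_integral lborel (\<lambda>u. exp (a\<^sup>2 / 4) * (a / 2) * (indicator {0..} u *\<^sub>R exp (- (u + a/2)\<^sup>2)))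
     (exp (a\<^sup>2 / 4) * (a / 2) * (sqrt pi / 2 - (LBINT t=0..a/2. exp (- (t^2)))))"
    by (rule has_bochner_integral_mult_right[OF T0]) (use a in simp)
  have pw: "exp (a\<^sup>2 / 4) * (indicator {0..} u *\<^sub>R ((u + a/2) * exp (- (u + a/2)\<^sup>2))) -
      exp (a\<^sup>2 / 4) * (a / 2) * (indicator {0..} u *\<^sub>R exp (- (u + a/2)\<^sup>2)) =
      indicator {0..} u *\<^sub>R (sgn (u - 0) * (u * exp (- u\<^sup>2)) * exp (- a * \<bar>0 - u\<bar>))" for u
  proof (cases "u \<ge> 0")
    case True
    have "exp (a\<^sup>2 / 4) * ((u + a/2) * exp (- (u + a/2)\<^sup>2)) - exp (a\<^sup>2 / 4) * (a / 2) * exp (- (u + a/2)\<^sup>2)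
        = u * (exp (a\<^sup>2 / 4) * exp (- (u + a/2)\<^sup>2))" by (simp add: algebra_simps)
    also have "\<dots> = sgn (u - 0) * (u * exp (- u\<^sup>2)) * exp (- a * \<bar>0 - u\<bar>)"
      using True by (cases "u = 0") (auto simp: expid)
    finally show ?thesis using True by simp
  qed simp
  show ?thesis
    using has_bochner_integral_diff[OF h1 h0] by (simp only: pw)
qed

lemma N0_zero:
  fixes a :: real shows "N0 a 0 = 0"
proof -
  define f where "f x = x * exp (- x\<^sup>2) * exp (- a * \<bar>0 - x\<bar>)" for x :: real
  have fm: "f (0 + -1 * x) = - f x" for x by (simp add: f_def)
  have "(LINT x|lborel. f x) = \<bar>-1::real\<bar> *\<^sub>R (LINT x|lborel. f (0 + -1 * x))"
    by (rule lborel_integral_real_affine) simp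
  also have "\<dots> = (LINT x|lborel. - f x)" by (simp only: fm) simp
  also have "\<dots> = - (LINT x|lborel. f x)" by (rule integral_minus)
  finally have "(LINT x|lborel. f x) = 0" by simp
  then show ?thesis unfolding N0_def f_def .
qed

theorem mainTheorem15:
  fixes sigma0 sigmaeps theta0 :: real
  assumes "sigma0 > 0" and "sigmaeps > 0"
  defines "a \<equiv> sqrt 2 * sigma0 / sigmaeps"
  shows "(post_mean theta0 sigma0 sigmaeps has_real_derivative
            (a / 2) * (2 / (sqrt pi * erfcx (a / 2)) - a)) (at theta0)"
proof -
  define b where "b = sqrt 2 * sigma0"
  have bp: "b > 0" using assms(1) by (simp add: b_def)
  have adef: "a = b / sigmaeps" by (simp add: a_def b_def)
  have ap: "a > 0" using bp assms(2) adef by simp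
  define L where "L = (LBINT t=0..a/2. exp (- (t^2)))"
  define J where "J = sqrt pi / 2 - L"
  define Ea where "Ea = exp (a\<^sup>2 / 4)"
  define V0 where "V0 = Ea * J"
  define V1 where "V1 = Ea * (exp (- (a/2)\<^sup>2) / 2) - Ea * (a / 2) * J"
  define F where "F y = (theta0 * D0 a y + b * N0 a y) / D0 a y" for y
  have pm: "post_mean theta0 sigma0 sigmaeps = (\<lambda>x. F ((x - theta0) / b))"
    by (rule ext) (simp add: F_def reduce[OF assms(1,2) b_def adef])
  have f0even: "has_bochner_integral lborel (\<lambda>u. exp (- u\<^sup>2) * exp (- a * \<bar>0 - u\<bar>)) (2 *\<^sub>R V0)"
    by (rule has_bochner_integral_even_function[OF Hv0[OF ap, folded L_def J_def Ea_def, folded V0_def]]) simp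
  then have D00: "D0 a 0 = 2 * V0"
    by (simp add: D0_def has_bochner_integral_integral_eq)
  have f1even: "has_bochner_integral lborel (\<lambda>u. sgn (u - 0) * (u * exp (- u\<^sup>2)) * exp (- a * \<bar>0 - u\<bar>)) (2 *\<^sub>R V1)"
    by (rule has_bochner_integral_even_function[OF Hv1[OF ap, folded L_def J_def Ea_def, folded V1_def]])
      (simp add: sgn_minus)
  then have I1: "(LINT u|lborel. sgn (u - 0) * (u * exp (- u\<^sup>2)) * exp (- a * \<bar>0 - u\<bar>)) = 2 * V1"
    by (simp add: has_bochner_integral_integral_eq)
  have D0pos: "D0 a 0 > 0"
  proof -
    have int: "integrable lborel (\<lambda>u. exp (- u\<^sup>2) * exp (- a * \<bar>0 - u\<bar>))"
      using f0even by (rule integrable.intros)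
    have "D0 a 0 \<ge> 0" unfolding D0_def by (intro integral_nonneg_AE) auto
    moreover have "D0 a 0 \<noteq> 0"
    proof
      assume "D0 a 0 = 0"
      then have "AE u in lborel. exp (- u\<^sup>2) * exp (- a * \<bar>0 - u\<bar>) = 0"
        unfolding D0_def by (subst (asm) integral_nonneg_eq_0_iff_AE[OF int]) auto
      then have "AE (u::real) in lborel. False" by simp
      then show False by (subst (asm) AE_iff_measurable[where N=UNIV]) auto
    qed
    ultimately show ?thesis by simp
  qed
  have V0pos: "V0 > 0" using D0pos D00 by simp
  have Eapos: "Ea > 0" by (simp add: Ea_def)
  have Jpos: "J > 0" using V0pos Eapos by (simp add: V0_def zero_less_mult_iff)
  obtain d0 where dD: "(D0 a has_real_derivative d0) (at 0)"
  proof -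
    have c0: "continuous_on UNIV (\<lambda>t::real. exp (- t\<^sup>2))" by (intro continuous_intros)
    show ?thesis
      using lapA[OF ap c0 gi0, of 0] that unfolding D0_def[abs_def] by blast
  qed
  have dN: "(N0 a has_real_derivative a * (2 * V1)) (at 0)"
  proof -
    have c: "continuous_on UNIV (\<lambda>t::real. t * exp (- t\<^sup>2))" by (intro continuous_intros)
    show ?thesis
      using lapA[OF ap c gi1, of 0] unfolding N0_def[abs_def] I1 .
  qed
  have dF: "(F has_real_derivative ((theta0 * d0 + b * (a * (2 * V1))) * D0 a 0 - (theta0 * D0 a 0 + b * N0 a 0) * d0) / (D0 a 0 * D0 a 0)) (at 0)"
  proof -
    have "((\<lambda>y. theta0 * D0 a y + b * N0 a y) has_real_derivative theta0 * d0 + b * (a * (2 * V1))) (at 0)"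
      by (intro Deriv.field_differentiable_add DERIV_cmult dD dN)
    from DERIV_divide[OF this dD] D0pos show ?thesis unfolding F_def[abs_def] by simp
  qed
  have dF': "(F has_real_derivative b * a * V1 / V0) (at ((theta0 - theta0) / b))"
  proof -
    have "((theta0 * d0 + b * (a * (2 * V1))) * D0 a 0 - (theta0 * D0 a 0 + b * N0 a 0) * d0) / (D0 a 0 * D0 a 0)
       = b * a * V1 / V0"
      using V0pos by (simp add: N0_zero D00 field_simps)
    then show ?thesis using dF by simp
  qed
  have dlin: "((\<lambda>x. (x - theta0) / b) has_real_derivative 1 / b) (at theta0)"
    using bp by (auto intro!: derivative_eq_intros)
  have chain: "((\<lambda>x. F ((x - theta0) / b)) has_real_derivative (b * a * V1 / V0) * (1 / b)) (at theta0)"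
    by (rule DERIV_chain'[OF dlin dF'])
  have erf: "sqrt pi * erfcx (a / 2) = 2 * Ea * J"
  proof -
    have "sqrt pi * erfcx (a / 2) = Ea * (sqrt pi - 2 * L)"
      unfolding erfcx_def L_def Ea_def by (simp add: power_divide field_simps)
    then show ?thesis by (simp add: J_def algebra_simps)
  qed
  have "(b * a * V1 / V0) * (1 / b) = (a / 2) * (2 / (sqrt pi * erfcx (a / 2)) - a)"
  proof -
    have e: "Ea * exp (- (a/2)\<^sup>2) = 1"
      by (simp add: Ea_def exp_add[symmetric] power_divide)
    have V1e: "V1 = 1 / 2 - a / 2 * (Ea * J)" unfolding V1_def using e by (simp add: algebra_simps)
    have X: "Ea * J > 0" using Eapos Jpos by simp
    have alg: "X > 0 \<Longrightarrow> a * (1 / 2 - a / 2 * X) / X = a / 2 * (2 / (2 * X) - a)" for X :: real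
      by (simp add: field_simps)
    have "(b * a * V1 / V0) * (1 / b) = a * V1 / V0" using bp by simp
    also have "\<dots> = a * (1 / 2 - a / 2 * (Ea * J)) / (Ea * J)" unfolding V1e V0_def ..
    also have "\<dots> = a / 2 * (2 / (2 * (Ea * J)) - a)" by (rule alg[OF X])
    also have "\<dots> = (a / 2) * (2 / (sqrt pi * erfcx (a / 2)) - a)" unfolding erf by (simp add: mult.assoc)
    finally show ?thesis .
  qed
  note eq = this
  show ?thesis unfolding pm using chain unfolding eq .
qed

end
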